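(* For all nonnegative integers $x,y$, with $m=x+y$, $L=2^m$, $M=3^m$, $$H(\mathbf p^\star_{x,y})\ \ge\ \frac{m\,L}{M}\,(\log_2 3-1)\left[\left(\tfrac32\right)^{m}-\tfrac12\right].$$
   Context: Clumpy distribution: let $n_1\ge n_2\ge\dots\ge n_L$ be the list in which, for each $u=0,1,\dots,m$, the value $2^{m-u}$ appears exactly $\binom mu$ times (so $\sum_in_i=3^m=M$); let $\mathbf e_i^\star\in\{0,1\}^L$ have ones in its first $n_i$ positions and zeros elsewhere; $\mathbf p^\star_{x,y}=\frac1M\sum_{i=1}^L\mathbf e_i^\star$, a probability mass function on $[L]$. $H$ denotes Shannon entropy in bits. *)

theory Defs
  imports Complex_Main
begin

definition clumpy_list :: "nat \<Rightarrow> nat list" where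
  "clumpy_list m = concat (map (\<lambda>u. replicate (m choose u) (2 ^ (m - u))) [0..<Suc m])"

definition clumpy_e :: "nat \<Rightarrow> nat \<Rightarrow> nat \<Rightarrow> real" where
  "clumpy_e m i j = (if j < clumpy_list m ! i then 1 else 0)"

text \<open>p*_{x,y} = (1/M) sum_i e_i, with M = 3^m, as a function on positions {0..<L}, L = 2^m.\<close>
definition clumpy_p :: "nat \<Rightarrow> nat \<Rightarrow> nat \<Rightarrow> real" where
  "clumpy_p x y j = (let m = x + y in
      (\<Sum>i<length (clumpy_list m). clumpy_e m i j) / 3 ^ m)"

definition entropy_bits :: "nat \<Rightarrow> (nat \<Rightarrow> real) \<Rightarrow> real" where
  "entropy_bits L p = - (\<Sum>j<L. if p j = 0 then 0 else p j * log 2 (p j))"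

end

theory Submission
  imports Defs
begin

lemma gen_concat: "length (concat (map g [0..<Suc m])) = (\<Sum>u\<le>m. length (g u))"
  "sum_list (concat (map h [0..<Suc m])) = (\<Sum>u\<le>m. sum_list (h u :: nat list))"
  by (induction m) auto

lemma cl_len: "length (clumpy_list m) = 2 ^ m"
proof -
  have "length (clumpy_list m) = (\<Sum>u\<le>m. m choose u)"
    unfolding clumpy_list_def gen_concat by simp
  also have "\<dots> = 2 ^ m" by (rule choose_row_sum)
  finally show ?thesis .
qed

lemma cl_le: "v \<in> set (clumpy_list m) \<Longrightarrow> v \<le> 2 ^ m"
  unfolding clumpy_list_def by (auto intro: power_increasing)

lemma cl_sum: "sum_list (clumpy_list m) = 3 ^ m"
proof -
  have "sum_list (clumpy_list m) = (\<Sum>u\<le>m. (m choose u) * 2 ^ (m - u))"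
    unfolding clumpy_list_def gen_concat by (simp add: sum_list_replicate)
  also have "\<dots> = (1 + 2) ^ m" using binomial_ring[of "1::nat" 2 m] by simp
  finally show ?thesis by (simp add: numeral_3_eq_3)
qed

lemma count_lt: "n \<le> L \<Longrightarrow> (\<Sum>j<L. (if j < n then 1 else 0::real)) = real n"
proof -
  assume "n \<le> L"
  hence "{j. j < L \<and> j < n} = {..<n}" by auto
  thus ?thesis by (simp add: sum.If_cases Int_def)
qed

theorem mainTheorem11:
  fixes x y :: nat
  shows "entropy_bits (2 ^ (x + y)) (clumpy_p x y) \<ge>
    real (x + y) * 2 ^ (x + y) / 3 ^ (x + y) * (log 2 3 - 1) * ((3/2) ^ (x + y) - 1/2)"
proof -
  define m where "m = x + y"
  define xs where "xs = clumpy_list m"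
  define L :: nat where "L = 2 ^ m"
  define K where "K = real m * (log 2 3 - 1)"
  have p: "clumpy_p x y j = (\<Sum>i<length xs. if j < xs ! i then 1 else 0) / 3 ^ m" for j
    by (simp add: clumpy_p_def clumpy_e_def m_def xs_def Let_def)
  have lenxs: "length xs = L" by (simp add: xs_def L_def cl_len)
  have pnn: "clumpy_p x y j \<ge> 0" for j unfolding p by (auto intro!: sum_nonneg divide_nonneg_nonneg)
  have pub: "clumpy_p x y j \<le> (2/3) ^ m" for j
  proof -
    have "(\<Sum>i<length xs. if j < xs ! i then 1 else 0::real) \<le> (\<Sum>i<length xs. 1)"
      by (rule sum_mono) auto
    hence "(\<Sum>i<length xs. if j < xs ! i then 1 else 0::real) \<le> 2 ^ m"
      using lenxs by (simp add: L_def)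
    hence "clumpy_p x y j \<le> 2 ^ m / 3 ^ m" unfolding p by (simp add: divide_right_mono)
    thus ?thesis by (simp add: power_divide)
  qed
  have psum: "(\<Sum>j<L. clumpy_p x y j) = 1"
  proof -
    have "(\<Sum>j<L. clumpy_p x y j) = (\<Sum>j<L. \<Sum>i<length xs. if j < xs ! i then 1 else 0::real) / 3 ^ m"
      unfolding p by (simp add: sum_divide_distrib)
    also have "(\<Sum>j<L. \<Sum>i<length xs. if j < xs ! i then 1 else 0::real) = (\<Sum>i<length xs. \<Sum>j<L. if j < xs ! i then 1 else 0::real)"
      by (rule sum.swap)
    also have "\<dots> = (\<Sum>i<length xs. real (xs ! i))"
    proof (rule sum.cong)
      fix i assume "i \<in> {..<length xs}"
      hence "xs ! i \<le> L" using cl_le[of "xs ! i" m] by (simp add: xs_def L_def)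
      thus "(\<Sum>j<L. if j < xs ! i then 1 else 0::real) = real (xs ! i)" by (rule count_lt)
    qed simp
    also have "\<dots> = real (sum_list xs)"
      by (simp add: sum_list_sum_nth atLeast0LessThan)
    also have "\<dots> = 3 ^ m" by (simp add: xs_def cl_sum)
    finally show ?thesis by simp
  qed
  have lq: "log 2 ((2/3) ^ m) = - K"
    by (simp add: K_def log_nat_power log_divide algebra_simps)
  have tm: "- (if clumpy_p x y j = 0 then 0 else clumpy_p x y j * log 2 (clumpy_p x y j)) \<ge> clumpy_p x y j * K" for j
  proof (cases "clumpy_p x y j = 0")
    case False
    hence pos: "clumpy_p x y j > 0" using pnn[of j] by linarith
    have "log 2 (clumpy_p x y j) \<le> log 2 ((2/3)^m)"
      using pos pub[of j] by simp
    hence "clumpy_p x y j * log 2 (clumpy_p x y j) \<le> clumpy_p x y j * (- K)"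
      using pos lq mult_left_mono[of "log 2 (clumpy_p x y j)" "-K" "clumpy_p x y j"] by simp
    thus ?thesis using False by simp
  qed simp
  have "entropy_bits L (clumpy_p x y) \<ge> (\<Sum>j<L. clumpy_p x y j * K)"
    unfolding entropy_bits_def sum_negf[symmetric] by (rule sum_mono) (use tm in auto)
  also have "(\<Sum>j<L. clumpy_p x y j * K) = K" using psum by (simp add: sum_distrib_right[symmetric])
  finally have H: "entropy_bits L (clumpy_p x y) \<ge> K" .
  have l3: "log 2 3 \<ge> 1" by simp
  have Kn: "K \<ge> 0" using l3 by (simp add: K_def)
  have "(2::real) ^ m / 3 ^ m * ((3/2) ^ m - 1/2) \<le> 1"
  proof -
    have "(2::real) ^ m / 3 ^ m * (3/2) ^ m = 1" by (simp add: power_divide)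
    moreover have "(2::real) ^ m / 3 ^ m * (1/2) \<ge> 0" by simp
    ultimately show ?thesis by (simp add: right_diff_distrib)
  qed
  hence "K * ((2::real) ^ m / 3 ^ m * ((3/2) ^ m - 1/2)) \<le> K"
    using Kn mult_left_le by blast
  moreover have "real m * 2 ^ m / 3 ^ m * (log 2 3 - 1) * ((3/2) ^ m - 1/2)
     = K * ((2::real) ^ m / 3 ^ m * ((3/2) ^ m - 1/2))" by (simp add: K_def)
  ultimately have "real m * 2 ^ m / 3 ^ m * (log 2 3 - 1) * ((3/2) ^ m - 1/2) \<le> entropy_bits L (clumpy_p x y)"
    using H by linarith
  thus ?thesis unfolding m_def L_def .
qed

end
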